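(* Let $G$ be a symmetric star topology with compute nodes $V_C$, where $w_v$ is the bandwidth of the edges between compute node $v$ and the center. Let $R,S$ be sets with $|R|<|S|$, $N=|R|+|S|$, initially partitioned among the compute nodes, node $v$ holding $R_v\subseteq R$, $S_v\subseteq S$, $N_v=|R_v|+|S_v|$. Let $V_\alpha=\{v\in V_C:\min\{N_v,N-N_v\}<|R|\}$ and $V_\beta=V_C\setminus V_\alpha$. If $\max_vN_v\le N/2$, then any algorithm computing $R\times S$ has (tuple) cost $\Omega(C)$, where \[C=\min\Big\{\frac{|S|}{\max_vw_v},\ \frac{\sum_{u\in V_\alpha}|S_u|}{2\sum_{u\in V_\beta}w_u},\ \mathcal V\big(R,\textstyle\bigcup_{u\in V_\alpha}S_u,V_\alpha\big)\Big\}.\]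
   Context: Topology-aware model: the network is a directed graph; each edge $e$ has bandwidth $w_e>0$; compute nodes store data and compute, other nodes only route. A symmetric star topology has compute nodes each connected to a single central routing node by an edge in each direction with equal bandwidth. The input is partitioned without duplication; the algorithm knows topology, bandwidths and local fragment sizes. Computation proceeds in synchronous rounds; the tuple cost of a round is $\max_e|Y(e)|/w_e$ with $|Y(e)|$ the number of elements routed through edge $e$; total cost is the sum over rounds. Computing $R\times S$ means every pair $(r,s)\in R\times S$ is emitted by at least one compute node holding both $r$ and $s$. For sets $R',S'$ and a set $U$ of compute nodes, $\mathcal V(R',S',U)$ denotes the smallest $C\ge0$ satisfying $\sum_{v\in U}\min\{C\cdot w_v,|R'|\}\cdot C\cdot w_v\ge|R'|\cdot|S'|$. *)

theory Defs
  imports Complex_Main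
begin

text \<open>Symmetric star topology: compute nodes V (a finite nonempty set), each node v
  connected to the central routing node c by an edge (v,c) and an edge (c,v), both of
  bandwidth w v > 0.  Input: relations R and S, node v holds Rv v and Sv v, the
  fragments partitioning R and S without duplication.\<close>

definition star_instance ::
  "'v set \<Rightarrow> ('v \<Rightarrow> real) \<Rightarrow> 'r set \<Rightarrow> 's set \<Rightarrow> ('v \<Rightarrow> 'r set) \<Rightarrow> ('v \<Rightarrow> 's set) \<Rightarrow> bool" where
  "star_instance V w R S Rv Sv \<longleftrightarrow>
     finite V \<and> V \<noteq> {} \<and> (\<forall>v\<in>V. w v > 0) \<and> finite R \<and> finite S \<and>
     R = (\<Union>v\<in>V. Rv v) \<and> S = (\<Union>v\<in>V. Sv v) \<and>
     (\<forall>u\<in>V. \<forall>v\<in>V. u \<noteq> v \<longrightarrow> Rv u \<inter> Rv v = {} \<and> Sv u \<inter> Sv v = {})"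

definition init_data :: "('v \<Rightarrow> 'r set) \<Rightarrow> ('v \<Rightarrow> 's set) \<Rightarrow> 'v \<Rightarrow> ('r + 's) set" where
  "init_data Rv Sv v = Inl ` Rv v \<union> Inr ` Sv v"

text \<open>An execution: in round t node v sends the set of elements M t v u to node u
  (routed along v \<rightarrow> c \<rightarrow> u).  know ... t v is what node v holds after t rounds.\<close>

fun know :: "'v set \<Rightarrow> ('v \<Rightarrow> 'e set) \<Rightarrow> (nat \<Rightarrow> 'v \<Rightarrow> 'v \<Rightarrow> 'e set) \<Rightarrow> nat \<Rightarrow> 'v \<Rightarrow> 'e set" where
  "know V K0 M 0 v = K0 v"
| "know V K0 M (Suc t) v = know V K0 M t v \<union> (\<Union>u\<in>V - {v}. M t u v)"

definition valid_exec :: "'v set \<Rightarrow> ('v \<Rightarrow> 'e set) \<Rightarrow> (nat \<Rightarrow> 'v \<Rightarrow> 'v \<Rightarrow> 'e set) \<Rightarrow> nat \<Rightarrow> bool" where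
  "valid_exec V K0 M T \<longleftrightarrow> (\<forall>t<T. \<forall>v\<in>V. \<forall>u\<in>V. M t v u \<subseteq> know V K0 M t v)"

text \<open>Number of elements routed through edge (v,c) resp. (c,v) in round t.\<close>

definition load_out :: "'v set \<Rightarrow> (nat \<Rightarrow> 'v \<Rightarrow> 'v \<Rightarrow> 'e set) \<Rightarrow> nat \<Rightarrow> 'v \<Rightarrow> nat" where
  "load_out V M t v = (\<Sum>u\<in>V - {v}. card (M t v u))"

definition load_in :: "'v set \<Rightarrow> (nat \<Rightarrow> 'v \<Rightarrow> 'v \<Rightarrow> 'e set) \<Rightarrow> nat \<Rightarrow> 'v \<Rightarrow> nat" where
  "load_in V M t u = (\<Sum>v\<in>V - {u}. card (M t v u))"

definition round_cost :: "'v set \<Rightarrow> ('v \<Rightarrow> real) \<Rightarrow> (nat \<Rightarrow> 'v \<Rightarrow> 'v \<Rightarrow> 'e set) \<Rightarrow> nat \<Rightarrow> real" where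
  "round_cost V w M t =
     Max ((\<lambda>v. real (load_out V M t v) / w v) ` V \<union> (\<lambda>v. real (load_in V M t v) / w v) ` V)"

definition total_cost :: "'v set \<Rightarrow> ('v \<Rightarrow> real) \<Rightarrow> (nat \<Rightarrow> 'v \<Rightarrow> 'v \<Rightarrow> 'e set) \<Rightarrow> nat \<Rightarrow> real" where
  "total_cost V w M T = (\<Sum>t<T. round_cost V w M t)"

definition computes_product ::
  "'v set \<Rightarrow> ('v \<Rightarrow> ('r + 's) set) \<Rightarrow> (nat \<Rightarrow> 'v \<Rightarrow> 'v \<Rightarrow> ('r + 's) set) \<Rightarrow> nat \<Rightarrow> 'r set \<Rightarrow> 's set \<Rightarrow> bool" where
  "computes_product V K0 M T R S \<longleftrightarrow>
     (\<forall>r\<in>R. \<forall>s\<in>S. \<exists>v\<in>V. \<exists>t\<le>T. Inl r \<in> know V K0 M t v \<and> Inr s \<in> know V K0 M t v)"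

definition volV :: "'a set \<Rightarrow> 'b set \<Rightarrow> 'v set \<Rightarrow> ('v \<Rightarrow> real) \<Rightarrow> real" where
  "volV R' S' U w = Inf {C::real. C \<ge> 0 \<and>
      (\<Sum>v\<in>U. min (C * w v) (real (card R')) * C * w v) \<ge> real (card R') * real (card S')}"

text \<open>The lower-bound quantity C of the theorem.  When V_beta is empty the second term
  is +infinity and therefore dropped from the minimum.\<close>

definition star_bound ::
  "'v set \<Rightarrow> ('v \<Rightarrow> real) \<Rightarrow> 'r set \<Rightarrow> 's set \<Rightarrow> ('v \<Rightarrow> 'r set) \<Rightarrow> ('v \<Rightarrow> 's set) \<Rightarrow> real" where
  "star_bound V w R S Rv Sv =
    (let N = card R + card S;
         Nv = (\<lambda>v. card (Rv v) + card (Sv v));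
         Va = {v\<in>V. min (Nv v) (N - Nv v) < card R};
         Vb = V - Va;
         t1 = real (card S) / Max (w ` V);
         t2 = (\<Sum>u\<in>Va. real (card (Sv u))) / (2 * (\<Sum>u\<in>Vb. w u));
         t3 = volV R (\<Union>u\<in>Va. Sv u) Va w
     in if Vb = {} then min t1 t3 else min t1 (min t2 t3))"

end

theory Submission
  imports Defs
begin

lemma know_eq: "know V K0 M t x = K0 x \<union> (\<Union>t'\<in>{..<t}. \<Union>u\<in>V-{x}. M t' u x)"
  by (induction t) (auto simp: lessThan_Suc)

lemma know_mono: "t \<le> t' \<Longrightarrow> know V K0 M t x \<subseteq> know V K0 M t' x"
  unfolding know_eq by auto

lemma know_finite:
  assumes "finite V" "\<forall>v\<in>V. finite (K0 v)" "valid_exec V K0 M T"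
  shows "t \<le> T \<Longrightarrow> v \<in> V \<Longrightarrow> finite (know V K0 M t v)"
proof (induction t arbitrary: v)
  case 0 then show ?case using assms by simp
next
  case (Suc t)
  have "\<forall>u\<in>V - {v}. finite (M t u v)"
  proof
    fix u assume u: "u \<in> V - {v}"
    have "M t u v \<subseteq> know V K0 M t u" using assms(3) Suc.prems u unfolding valid_exec_def by auto
    moreover have "finite (know V K0 M t u)" using Suc u by auto
    ultimately show "finite (M t u v)" by (rule finite_subset)
  qed
  then show ?case using Suc assms(1) by auto
qed

lemma escape:
  assumes "valid_exec V K0 M T" "\<forall>y\<in>V. y \<noteq> x \<longrightarrow> e \<notin> K0 y"
  shows "t \<le> T \<Longrightarrow> y \<in> V \<Longrightarrow> y \<noteq> x \<Longrightarrow> e \<in> know V K0 M t y \<Longrightarrow>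
     e \<in> (\<Union>t'\<in>{..<T}. \<Union>u\<in>V-{x}. M t' x u)"
proof (induction t arbitrary: y)
  case 0 then show ?case using assms by simp
next
  case (Suc t)
  show ?case
  proof (cases "e \<in> know V K0 M t y")
    case True then show ?thesis using Suc by simp
  next
    case False
    then obtain u where u: "u \<in> V - {y}" "e \<in> M t u y" using Suc.prems by auto
    show ?thesis
    proof (cases "u = x")
      case True then show ?thesis using u Suc.prems by auto
    next
      case False
      have "t < T" using Suc.prems by simp
      then have "M t u y \<subseteq> know V K0 M t u" using assms(1) u Suc.prems unfolding valid_exec_def by blast
      then have "e \<in> know V K0 M t u" using u by blast
      then show ?thesis using Suc.IH[of u] False u Suc.prems by auto
    qed
  qed
qed

lemma load_in_le:
  assumes "finite V" "x \<in> V" "w x > 0"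
  shows "real (load_in V M t x) \<le> round_cost V w M t * w x"
proof -
  have "real (load_in V M t x) / w x \<le> round_cost V w M t"
    unfolding round_cost_def using assms by (intro Max_ge) auto
  then show ?thesis using assms by (simp add: divide_le_eq)
qed

lemma load_out_le:
  assumes "finite V" "x \<in> V" "w x > 0"
  shows "real (load_out V M t x) \<le> round_cost V w M t * w x"
proof -
  have "real (load_out V M t x) / w x \<le> round_cost V w M t"
    unfolding round_cost_def using assms by (intro Max_ge) auto
  then show ?thesis using assms by (simp add: divide_le_eq)
qed

lemma round_cost_nonneg:
  assumes "finite V" "V \<noteq> {}" "\<forall>v\<in>V. w v > 0"
  shows "round_cost V w M t \<ge> 0"
proof -
  obtain x where "x \<in> V" using assms by auto
  have "w x > 0" using assms \<open>x\<in>V\<close> by simp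
  then have "0 \<le> real (load_in V M t x) / w x" by simp
  also have "\<dots> \<le> round_cost V w M t"
    unfolding round_cost_def using assms \<open>x\<in>V\<close> by (intro Max_ge) auto
  finally show ?thesis .
qed

lemma rec_card:
  assumes "finite V" "x \<in> V" "w x > 0"
  shows "real (card (\<Union>t'\<in>{..<T}. \<Union>u\<in>V-{x}. M t' u x)) \<le> total_cost V w M T * w x"
proof -
  have "card (\<Union>t'\<in>{..<T}. \<Union>u\<in>V-{x}. M t' u x) \<le> (\<Sum>t'<T. card (\<Union>u\<in>V-{x}. M t' u x))"
    by (rule card_UN_le) simp
  also have "\<dots> \<le> (\<Sum>t'<T. load_in V M t' x)"
    unfolding load_in_def using assms by (intro sum_mono card_UN_le) auto
  finally have "real (card (\<Union>t'\<in>{..<T}. \<Union>u\<in>V-{x}. M t' u x)) \<le> (\<Sum>t'<T. real (load_in V M t' x))"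
    by (metis of_nat_le_iff of_nat_sum)
  also have "\<dots> \<le> (\<Sum>t'<T. round_cost V w M t' * w x)"
    using assms by (intro sum_mono load_in_le) auto
  also have "\<dots> = total_cost V w M T * w x"
    unfolding total_cost_def by (simp add: sum_distrib_right)
  finally show ?thesis .
qed

lemma snt_card:
  assumes "finite V" "x \<in> V" "w x > 0"
  shows "real (card (\<Union>t'\<in>{..<T}. \<Union>u\<in>V-{x}. M t' x u)) \<le> total_cost V w M T * w x"
proof -
  have "card (\<Union>t'\<in>{..<T}. \<Union>u\<in>V-{x}. M t' x u) \<le> (\<Sum>t'<T. card (\<Union>u\<in>V-{x}. M t' x u))"
    by (rule card_UN_le) simp
  also have "\<dots> \<le> (\<Sum>t'<T. load_out V M t' x)"
    unfolding load_out_def using assms by (intro sum_mono card_UN_le) auto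
  finally have "real (card (\<Union>t'\<in>{..<T}. \<Union>u\<in>V-{x}. M t' x u)) \<le> (\<Sum>t'<T. real (load_out V M t' x))"
    by (metis of_nat_le_iff of_nat_sum)
  also have "\<dots> \<le> (\<Sum>t'<T. round_cost V w M t' * w x)"
    using assms by (intro sum_mono load_out_le) auto
  also have "\<dots> = total_cost V w M T * w x"
    unfolding total_cost_def by (simp add: sum_distrib_right)
  finally show ?thesis .
qed


theorem theorem9:
  "\<exists>c>0. \<forall>(V::nat set) (w::nat \<Rightarrow> real) (R::nat set) (S::nat set) Rv Sv
          (M::nat \<Rightarrow> nat \<Rightarrow> nat \<Rightarrow> (nat + nat) set) (T::nat).
      star_instance V w R S Rv Sv \<and> card R < card S \<and>
      (\<forall>v\<in>V. 2 * (card (Rv v) + card (Sv v)) \<le> card R + card S) \<and>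
      valid_exec V (init_data Rv Sv) M T \<and>
      computes_product V (init_data Rv Sv) M T R S
      \<longrightarrow> total_cost V w M T \<ge> c * star_bound V w R S Rv Sv"
proof (intro exI[of _ "1/18"] conjI allI impI)
  show "(0::real) < 1/18" by simp
next
  fix V :: "nat set" and w :: "nat \<Rightarrow> real" and R S :: "nat set" and Rv Sv
  and M :: "nat \<Rightarrow> nat \<Rightarrow> nat \<Rightarrow> (nat + nat) set" and T :: nat
  assume H: "star_instance V w R S Rv Sv \<and> card R < card S \<and>
      (\<forall>v\<in>V. 2 * (card (Rv v) + card (Sv v)) \<le> card R + card S) \<and>
      valid_exec V (init_data Rv Sv) M T \<and>
      computes_product V (init_data Rv Sv) M T R S"
  have fV: "finite V" and neV: "V \<noteq> {}" and wpos: "\<And>v. v \<in> V \<Longrightarrow> w v > 0"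
    and fR: "finite R" and fS: "finite S" and Req: "R = (\<Union>v\<in>V. Rv v)" and Seq: "S = (\<Union>v\<in>V. Sv v)"
    and disj: "\<And>u v. u \<in> V \<Longrightarrow> v \<in> V \<Longrightarrow> u \<noteq> v \<Longrightarrow> Rv u \<inter> Rv v = {} \<and> Sv u \<inter> Sv v = {}"
    using H unfolding star_instance_def by auto
  have RS: "card R < card S" and half: "\<And>v. v \<in> V \<Longrightarrow> 2 * (card (Rv v) + card (Sv v)) \<le> card R + card S"
    and valid: "valid_exec V (init_data Rv Sv) M T"
    and comp: "computes_product V (init_data Rv Sv) M T R S" using H by auto
  define K0 where "K0 = init_data Rv Sv"
  define L where "L = total_cost V w M T"
  define K where "K = (\<lambda>x. know V K0 M T x)"
  define Rec where "Rec = (\<lambda>x. \<Union>t'\<in>{..<T}. \<Union>u\<in>V-{x}. M t' u x)"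
  define Snt where "Snt = (\<lambda>x. \<Union>t'\<in>{..<T}. \<Union>u\<in>V-{x}. M t' x u)"
  have RvR: "\<And>x. x \<in> V \<Longrightarrow> Rv x \<subseteq> R" and SvS: "\<And>x. x \<in> V \<Longrightarrow> Sv x \<subseteq> S" using Req Seq by auto
  have fRv: "\<And>x. x \<in> V \<Longrightarrow> finite (Rv x)" using RvR fR finite_subset by blast
  have fSv: "\<And>x. x \<in> V \<Longrightarrow> finite (Sv x)" using SvS fS finite_subset by blast
  have fK0: "\<forall>v\<in>V. finite (K0 v)" using fRv fSv unfolding K0_def init_data_def by auto
  have validK: "valid_exec V K0 M T" using valid K0_def by simp
  have Kfin: "\<And>x. x \<in> V \<Longrightarrow> finite (K x)" unfolding K_def
    using know_finite[OF fV fK0 validK] by simp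
  have Keq: "\<And>x. K x = K0 x \<union> Rec x" unfolding K_def Rec_def by (rule know_eq)
  have Recfin: "\<And>x. x \<in> V \<Longrightarrow> finite (Rec x)" using Kfin Keq by (metis finite_Un)
  have Sntfin: "\<And>x. x \<in> V \<Longrightarrow> finite (Snt x)"
  proof -
    fix x assume x: "x \<in> V"
    have "Snt x \<subseteq> K x"
    proof
      fix e assume "e \<in> Snt x"
      then obtain t u where tu: "t < T" "u \<in> V - {x}" "e \<in> M t x u" unfolding Snt_def by auto
      then have "e \<in> know V K0 M t x" using validK x unfolding valid_exec_def by blast
      moreover have "know V K0 M t x \<subseteq> know V K0 M T x" using tu(1) by (intro know_mono) simp
      ultimately show "e \<in> K x" unfolding K_def by blast
    qed
    then show "finite (Snt x)" using Kfin x finite_subset by blast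
  qed
  have recc: "\<And>x. x \<in> V \<Longrightarrow> real (card (Rec x)) \<le> L * w x"
    unfolding Rec_def L_def by (rule rec_card[OF fV _ wpos])
  have sntc: "\<And>x. x \<in> V \<Longrightarrow> real (card (Snt x)) \<le> L * w x"
    unfolding Snt_def L_def by (rule snt_card[OF fV _ wpos])
  have Lnn: "L \<ge> 0" unfolding L_def total_cost_def
    using round_cost_nonneg[OF fV neV] wpos by (intro sum_nonneg) blast
  have cov: "\<And>r s. r \<in> R \<Longrightarrow> s \<in> S \<Longrightarrow> \<exists>y\<in>V. Inl r \<in> K y \<and> Inr s \<in> K y"
  proof -
    fix r s assume "r \<in> R" "s \<in> S"
    then obtain y t where "y \<in> V" "t \<le> T" "Inl r \<in> know V K0 M t y" "Inr s \<in> know V K0 M t y"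
      using comp unfolding computes_product_def K0_def by blast
    moreover have "know V K0 M t y \<subseteq> know V K0 M T y" using \<open>t \<le> T\<close> by (rule know_mono)
    ultimately show "\<exists>y\<in>V. Inl r \<in> K y \<and> Inr s \<in> K y" unfolding K_def by blast
  qed
  have K0l: "\<And>x r. Inl r \<in> K0 x \<longleftrightarrow> r \<in> Rv x" unfolding K0_def init_data_def by auto
  have K0r: "\<And>x s. Inr s \<in> K0 x \<longleftrightarrow> s \<in> Sv x" unfolding K0_def init_data_def by auto
  have Rx: "\<And>x. x \<in> V \<Longrightarrow> real (card (Rv x)) \<le> L * w x"
  proof (rule ccontr)
    fix x assume x: "x \<in> V" and c: "\<not> real (card (Rv x)) \<le> L * w x"
    have "card (Snt x) < card (Inl ` Rv x :: (nat + nat) set)"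
      using c sntc[OF x] by (simp add: card_image)
    then have "\<not> Inl ` Rv x \<subseteq> Snt x"
    proof (intro notI)
      assume "(Inl ` Rv x :: (nat + nat) set) \<subseteq> Snt x"
      then have "card (Inl ` Rv x :: (nat + nat) set) \<le> card (Snt x)" by (rule card_mono[OF Sntfin[OF x]])
      then show False using \<open>card (Snt x) < card (Inl ` Rv x :: (nat + nat) set)\<close> by simp
    qed
    then obtain r where r: "r \<in> Rv x" "Inl r \<notin> Snt x" by auto
    have nk: "\<forall>y\<in>V. y \<noteq> x \<longrightarrow> Inl r \<notin> K0 y" using disj x r K0l by blast
    have "Inr ` S \<subseteq> Inr ` Sv x \<union> Rec x"
    proof
      fix e :: "nat + nat" assume "e \<in> Inr ` S"
      then obtain s where s: "s \<in> S" "e = Inr s" by auto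
      obtain y where y: "y \<in> V" "Inl r \<in> K y" "Inr s \<in> K y" using cov[OF _ s(1)] r RvR[OF x] by blast
      have "y = x"
      proof (rule ccontr)
        assume "y \<noteq> x"
        then have "Inl r \<in> Snt x" using escape[OF validK nk, of T y] y unfolding K_def Snt_def by auto
        then show False using r by simp
      qed
      then show "e \<in> Inr ` Sv x \<union> Rec x" using y s Keq K0r by auto
    qed
    then have "card (Inr ` S :: (nat + nat) set) \<le> card (Inr ` Sv x \<union> Rec x)"
      using fSv[OF x] Recfin[OF x] by (intro card_mono) auto
    also have "\<dots> \<le> card (Inr ` Sv x :: (nat + nat) set) + card (Rec x)" by (rule card_Un_le)
    finally have "card S \<le> card (Sv x) + card (Rec x)" by (simp add: card_image)
    then have "real (card S) \<le> real (card (Sv x)) + L * w x" using recc[OF x] by linarith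
    moreover have "real (2 * (card (Rv x) + card (Sv x))) \<le> real (card R + card S)" using half[OF x] by linarith
    moreover have "real (card R) < real (card S)" using RS by simp
    ultimately show False using c by simp
  qed
  have Sx: "\<And>x. x \<in> V \<Longrightarrow> card (Rv x) + card (Sv x) < card R \<Longrightarrow> real (card (Sv x)) \<le> L * w x"
  proof (rule ccontr)
    fix x assume x: "x \<in> V" and sm: "card (Rv x) + card (Sv x) < card R" and c: "\<not> real (card (Sv x)) \<le> L * w x"
    have "card (Snt x) < card (Inr ` Sv x :: (nat + nat) set)"
      using c sntc[OF x] by (simp add: card_image)
    then have "\<not> Inr ` Sv x \<subseteq> Snt x"
    proof (intro notI)
      assume "(Inr ` Sv x :: (nat + nat) set) \<subseteq> Snt x"
      then have "card (Inr ` Sv x :: (nat + nat) set) \<le> card (Snt x)" by (rule card_mono[OF Sntfin[OF x]])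
      then show False using \<open>card (Snt x) < card (Inr ` Sv x :: (nat + nat) set)\<close> by simp
    qed
    then obtain s where s: "s \<in> Sv x" "Inr s \<notin> Snt x" by auto
    have nk: "\<forall>y\<in>V. y \<noteq> x \<longrightarrow> Inr s \<notin> K0 y" using disj x s K0r by blast
    have "Inl ` R \<subseteq> Inl ` Rv x \<union> Rec x"
    proof
      fix e :: "nat + nat" assume "e \<in> Inl ` R"
      then obtain r where r: "r \<in> R" "e = Inl r" by auto
      obtain y where y: "y \<in> V" "Inl r \<in> K y" "Inr s \<in> K y" using cov[OF r(1)] s SvS[OF x] by blast
      have "y = x"
      proof (rule ccontr)
        assume "y \<noteq> x"
        then have "Inr s \<in> Snt x" using escape[OF validK nk, of T y] y unfolding K_def Snt_def by auto
        then show False using s by simp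
      qed
      then show "e \<in> Inl ` Rv x \<union> Rec x" using y r Keq K0l by auto
    qed
    then have "card (Inl ` R :: (nat + nat) set) \<le> card (Inl ` Rv x \<union> Rec x)"
      using fRv[OF x] Recfin[OF x] by (intro card_mono) auto
    also have "\<dots> \<le> card (Inl ` Rv x :: (nat + nat) set) + card (Rec x)" by (rule card_Un_le)
    finally have "card R \<le> card (Rv x) + card (Rec x)" by (simp add: card_image)
    then have "real (card R) \<le> real (card (Rv x)) + L * w x" using recc[OF x] by linarith
    then show False using c sm by linarith
  qed
  define N where "N = card R + card S"
  define Nv where "Nv = (\<lambda>v. card (Rv v) + card (Sv v))"
  define Va where "Va = {v\<in>V. min (Nv v) (N - Nv v) < card R}"
  define Vb where "Vb = V - Va"
  define t1 where "t1 = real (card S) / Max (w ` V)"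
  define t2 where "t2 = (\<Sum>u\<in>Va. real (card (Sv u))) / (2 * (\<Sum>u\<in>Vb. w u))"
  define Sa where "Sa = (\<Union>u\<in>Va. Sv u)"
  define t3 where "t3 = volV R Sa Va w"
  have SB: "star_bound V w R S Rv Sv = (if Vb = {} then min t1 t3 else min t1 (min t2 t3))"
    unfolding star_bound_def Let_def N_def Nv_def Va_def Vb_def t1_def t2_def t3_def Sa_def by simp
  have VaV: "Va \<subseteq> V" and VbV: "Vb \<subseteq> V" unfolding Va_def Vb_def by auto
  have fVa: "finite Va" and fVb: "finite Vb" using VaV VbV fV finite_subset by auto
  have VaI: "\<And>x. x \<in> Va \<Longrightarrow> card (Rv x) + card (Sv x) < card R"
  proof -
    fix x assume x: "x \<in> Va"
    then have "x \<in> V" using VaV by auto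
    then have "Nv x \<le> N - Nv x" using half unfolding Nv_def N_def by fastforce
    then show "card (Rv x) + card (Sv x) < card R" using x unfolding Va_def Nv_def by auto
  qed
  define A where "A = (\<lambda>x. {r\<in>R. Inl r \<in> K x})"
  define B where "B = (\<lambda>x. {s\<in>S. Inr s \<in> K x})"
  define Q where "Q = (\<Union>x\<in>Vb. Inr -` Rec x)"
  define X where "X = (\<Sum>v\<in>Va. min (L * w v) (real (card R)) * L * w v)"
  define Wb where "Wb = (\<Sum>u\<in>Vb. w u)"
  have Kc: "\<And>x. x \<in> Va \<Longrightarrow> real (card (K x)) \<le> 3 * (L * w x)"
  proof -
    fix x assume xa: "x \<in> Va"
    then have x: "x \<in> V" using VaV by auto
    have "card (K x) \<le> card (K0 x) + card (Rec x)" unfolding Keq by (rule card_Un_le)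
    moreover have "card (K0 x) \<le> card (Rv x) + card (Sv x)"
    proof -
      have "card (K0 x) \<le> card (Inl ` Rv x :: (nat+nat) set) + card (Inr ` Sv x :: (nat+nat) set)"
        unfolding K0_def init_data_def by (rule card_Un_le)
      also have "\<dots> \<le> card (Rv x) + card (Sv x)" by (intro add_mono card_image_le fRv fSv x)
      finally show ?thesis .
    qed
    ultimately have "real (card (K x)) \<le> real (card (Rv x)) + real (card (Sv x)) + real (card (Rec x))"
      by linarith
    then show "real (card (K x)) \<le> 3 * (L * w x)" using Rx[OF x] Sx[OF x VaI[OF xa]] recc[OF x] by linarith
  qed
  have Ac: "\<And>x. x \<in> V \<Longrightarrow> card (A x) \<le> card (K x)"
  proof -
    fix x assume x: "x \<in> V"
    have "card (A x) = card (Inl ` A x :: (nat+nat) set)" by (simp add: card_image)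
    also have "\<dots> \<le> card (K x)" using Kfin[OF x] unfolding A_def by (intro card_mono) auto
    finally show "card (A x) \<le> card (K x)" .
  qed
  have Bc: "\<And>x. x \<in> V \<Longrightarrow> card (B x) \<le> card (K x)"
  proof -
    fix x assume x: "x \<in> V"
    have "card (B x) = card (Inr ` B x :: (nat+nat) set)" by (simp add: card_image)
    also have "\<dots> \<le> card (K x)" using Kfin[OF x] unfolding B_def by (intro card_mono) auto
    finally show "card (B x) \<le> card (K x)" .
  qed
  have AR: "\<And>x. card (A x) \<le> card R" unfolding A_def using fR by (intro card_mono) auto
  have pair: "\<And>x. x \<in> Va \<Longrightarrow> real (card (A x)) * real (card (B x)) \<le> 9 * (min (L * w x) (real (card R)) * L * w x)"
  proof -
    fix x assume xa: "x \<in> Va"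
    then have x: "x \<in> V" using VaV by auto
    define m where "m = L * w x"
    have m0: "m \<ge> 0" unfolding m_def using Lnn wpos[OF x] by simp
    have a1: "real (card (A x)) \<le> 3 * m" using Ac[OF x] Kc[OF xa] unfolding m_def by linarith
    have a2: "real (card (A x)) \<le> real (card R)" using AR[of x] by simp
    have b1: "real (card (B x)) \<le> 3 * m" using Bc[OF x] Kc[OF xa] unfolding m_def by linarith
    have a3: "real (card (A x)) \<le> 3 * min m (real (card R))" using a1 a2 by (auto simp: min_def)
    have "real (card (A x)) * real (card (B x)) \<le> (3 * min m (real (card R))) * (3 * m)"
      using a3 b1 m0 by (intro mult_mono) auto
    then show "real (card (A x)) * real (card (B x)) \<le> 9 * (min (L * w x) (real (card R)) * L * w x)"
      unfolding m_def by (simp add: algebra_simps)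
  qed
  have Qfin: "finite Q" unfolding Q_def
  proof (rule finite_UN_I[OF fVb])
    fix x assume "x \<in> Vb"
    then have "finite (Rec x)" using VbV Recfin by auto
    then show "finite (Inr -` Rec x :: nat set)" by (rule finite_vimageI) (simp add: inj_def)
  qed
  have Qc: "real (card Q) \<le> L * Wb"
  proof -
    have "card Q \<le> (\<Sum>x\<in>Vb. card (Inr -` Rec x :: nat set))" unfolding Q_def using fVb by (rule card_UN_le)
    also have "\<dots> \<le> (\<Sum>x\<in>Vb. card (Rec x))"
    proof (intro sum_mono)
      fix x assume "x \<in> Vb"
      then have x: "x \<in> V" using VbV by auto
      have "card (Inr -` Rec x :: nat set) = card (Inr ` (Inr -` Rec x) :: (nat+nat) set)"
        by (rule card_image[symmetric]) (simp add: inj_on_def)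
      also have "\<dots> \<le> card (Rec x)" using Recfin[OF x] by (intro card_mono) auto
      finally show "card (Inr -` Rec x :: nat set) \<le> card (Rec x)" .
    qed
    finally have "real (card Q) \<le> (\<Sum>x\<in>Vb. real (card (Rec x)))" by (metis of_nat_le_iff of_nat_sum)
    also have "\<dots> \<le> (\<Sum>x\<in>Vb. L * w x)" using VbV by (intro sum_mono recc) auto
    finally show ?thesis unfolding Wb_def by (simp add: sum_distrib_left)
  qed
  have covr: "R \<times> Sa \<subseteq> (\<Union>x\<in>Va. A x \<times> B x) \<union> (R \<times> Q)"
  proof
    fix p assume "p \<in> R \<times> Sa"
    then obtain r s u where p: "p = (r, s)" "r \<in> R" "u \<in> Va" "s \<in> Sv u" unfolding Sa_def by auto
    have u: "u \<in> V" using p VaV by auto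
    have sS: "s \<in> S" using SvS[OF u] p by auto
    obtain y where y: "y \<in> V" "Inl r \<in> K y" "Inr s \<in> K y" using cov[OF p(2) sS] by blast
    show "p \<in> (\<Union>x\<in>Va. A x \<times> B x) \<union> (R \<times> Q)"
    proof (cases "y \<in> Va")
      case True then show ?thesis using y p sS unfolding A_def B_def by auto
    next
      case False
      then have yb: "y \<in> Vb" "y \<noteq> u" using y p unfolding Vb_def by auto
      have "Inr s \<notin> K0 y" using disj[OF u y(1)] yb p K0r by auto
      then have "Inr s \<in> Rec y" using y Keq by auto
      then show ?thesis using yb p unfolding Q_def by auto
    qed
  qed
  have finU: "finite ((\<Union>x\<in>Va. A x \<times> B x) \<union> (R \<times> Q))"
    using fVa fR fS Qfin unfolding A_def B_def by auto
  have "card R * card Sa = card (R \<times> Sa)" by (simp add: card_cartesian_product)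
  also have "\<dots> \<le> card ((\<Union>x\<in>Va. A x \<times> B x) \<union> (R \<times> Q))" using finU covr by (rule card_mono)
  also have "\<dots> \<le> card (\<Union>x\<in>Va. A x \<times> B x) + card (R \<times> Q)" by (rule card_Un_le)
  also have "\<dots> \<le> (\<Sum>x\<in>Va. card (A x \<times> B x)) + card (R \<times> Q)" using fVa by (intro add_mono card_UN_le) auto
  finally have main0: "card R * card Sa \<le> (\<Sum>x\<in>Va. card (A x) * card (B x)) + card R * card Q"
    by (simp add: card_cartesian_product)
  then have "real (card R) * real (card Sa) \<le> (\<Sum>x\<in>Va. real (card (A x)) * real (card (B x))) + real (card R) * real (card Q)"
  proof -
    have "real (card R * card Sa) \<le> real ((\<Sum>x\<in>Va. card (A x) * card (B x)) + card R * card Q)"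
      using main0 by (simp only: of_nat_le_iff)
    then show ?thesis by (simp only: of_nat_add of_nat_mult of_nat_sum)
  qed
  also have "\<dots> \<le> 9 * X + real (card R) * (L * Wb)"
  proof (intro add_mono)
    show "(\<Sum>x\<in>Va. real (card (A x)) * real (card (B x))) \<le> 9 * X"
      unfolding X_def sum_distrib_left using pair by (intro sum_mono) auto
    show "real (card R) * real (card Q) \<le> real (card R) * (L * Wb)" using Qc by (intro mult_left_mono) auto
  qed
  finally have main: "real (card R) * real (card Sa) \<le> 9 * X + real (card R) * (L * Wb)" .
  have X0: "X \<ge> 0" unfolding X_def
  proof (intro sum_nonneg)
    fix v assume "v \<in> Va"
    then have "w v > 0" using wpos VaV by auto
    then have lw: "L * w v \<ge> 0" using Lnn by simp
    then have "min (L * w v) (real (card R)) \<ge> 0" by simp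
    then have "0 \<le> min (L * w v) (real (card R)) * (L * w v)" using lw by simp
    then show "0 \<le> min (L * w v) (real (card R)) * L * w v" by (simp add: mult.assoc)
  qed
  have Wb0: "Wb \<ge> 0" unfolding Wb_def using wpos VbV by (intro sum_nonneg) (auto intro: less_imp_le)
  have t3b: "real (card R) * real (card Sa) \<le> 18 * X \<Longrightarrow> t3 \<le> 18 * L"
  proof -
    assume h: "real (card R) * real (card Sa) \<le> 18 * X"
    have "18 * X \<le> (\<Sum>v\<in>Va. min ((18 * L) * w v) (real (card R)) * (18 * L) * w v)"
      unfolding X_def sum_distrib_left
    proof (intro sum_mono)
      fix v assume "v \<in> Va"
      then have v: "v \<in> V" using VaV by auto
      have lw: "L * w v \<ge> 0" using Lnn wpos[OF v] by simp
      have "min (L * w v) (real (card R)) \<le> min ((18 * L) * w v) (real (card R))" using lw by (auto simp: min_def)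
      then have "min (L * w v) (real (card R)) * (18 * (L * w v)) \<le> min ((18 * L) * w v) (real (card R)) * (18 * (L * w v))"
        using lw by (intro mult_right_mono) auto
      then show "18 * (min (L * w v) (real (card R)) * L * w v) \<le> min (18 * L * w v) (real (card R)) * (18 * L) * w v"
        by (simp add: algebra_simps)
    qed
    then have mem: "18 * L \<in> {C::real. C \<ge> 0 \<and>
      (\<Sum>v\<in>Va. min (C * w v) (real (card R)) * C * w v) \<ge> real (card R) * real (card Sa)}"
      using h Lnn by auto
    have "Inf {C::real. C \<ge> 0 \<and>
      (\<Sum>v\<in>Va. min (C * w v) (real (card R)) * C * w v) \<ge> real (card R) * real (card Sa)} \<le> 18 * L"
      by (rule cInf_lower[OF mem]) (rule bdd_belowI[of _ 0], auto)
    then show "t3 \<le> 18 * L" unfolding t3_def volV_def .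
  qed
  have "star_bound V w R S Rv Sv \<le> 18 * L"
  proof (cases "real (card R) * real (card Sa) \<le> 18 * X")
    case True
    then have "t3 \<le> 18 * L" by (rule t3b)
    then show ?thesis unfolding SB by auto
  next
    case False
    then have Vbne: "Vb \<noteq> {}" using main X0 unfolding Wb_def by auto
    then have Wbp: "Wb > 0" unfolding Wb_def using fVb VbV wpos by (intro sum_pos) auto
    have Rp: "real (card R) > 0" using False X0 by (cases "card R = 0") auto
    have "real (card R) * real (card Sa) \<le> 2 * (real (card R) * (L * Wb))" using False main by linarith
    then have "real (card R) * real (card Sa) \<le> real (card R) * (2 * L * Wb)" by (simp add: algebra_simps)
    then have sa: "real (card Sa) \<le> 2 * L * Wb" using Rp by (simp add: mult_le_cancel_left)
    have "card Sa = (\<Sum>u\<in>Va. card (Sv u))" unfolding Sa_def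
    proof (rule card_UN_disjoint[OF fVa])
      show "\<forall>i\<in>Va. finite (Sv i)" using fSv VaV by auto
      show "\<forall>i\<in>Va. \<forall>j\<in>Va. i \<noteq> j \<longrightarrow> Sv i \<inter> Sv j = {}" using disj VaV by blast
    qed
    then have "t2 = real (card Sa) / (2 * Wb)" unfolding t2_def Wb_def by simp
    also have "\<dots> \<le> L" using sa Wbp by (simp add: divide_le_eq algebra_simps)
    finally show ?thesis unfolding SB using Vbne Lnn by auto
  qed
  then show "1/18 * star_bound V w R S Rv Sv \<le> total_cost V w M T" unfolding L_def by simp
qed

end
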